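(* Let $\lambda$ be a nonzero real number. For any integer $p\ge2$, \[ \sum_{k=1}^{\infty}\frac{(-1)^{k-1}\lambda^{k-1}(1)_{k,1/\lambda}}{(k-1)!\,k^{p}(k+1)}=\sum_{k=1}^{p-1}(-1)^{k-1}\zeta_{\lambda}(p-k+1)+\frac{(-1)^{p-1}}{\lambda+1}. \]
   Context: For real $x$ and $\mu\neq 0$, set $(x)_{0,\mu}=1$ and $(x)_{n,\mu}=x(x-\mu)\cdots(x-(n-1)\mu)$ for $n\ge1$; thus $(1)_{k,1/\lambda}=1\cdot(1-\tfrac1\lambda)\cdots(1-\tfrac{k-1}{\lambda})$. The degenerate zeta function is $\zeta_{\lambda}(s)=\sum_{n=1}^{\infty}\frac{(-1)^{n-1}\lambda^{n-1}(1)_{n,1/\lambda}}{(n-1)!\,n^{s}}$ for $\mathrm{Re}(s)>1$. *)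

theory Defs
  imports Complex_Main
begin

definition dfall :: "real \<Rightarrow> nat \<Rightarrow> real \<Rightarrow> real" where
  "dfall x n mu = (\<Prod>i<n. x - real i * mu)"

definition dzeta_term :: "real \<Rightarrow> real \<Rightarrow> nat \<Rightarrow> real" where
  "dzeta_term lam s n =
     (-1) ^ (n - 1) * lam ^ (n - 1) * dfall 1 n (1 / lam) / (fact (n - 1) * real n powr s)"

definition dzeta :: "real \<Rightarrow> real \<Rightarrow> real" where
  "dzeta lam s = (\<Sum>n. dzeta_term lam s (Suc n))"

end

theory Submission imports Defs "HOL-Analysis.Analysis" begin

definition AA :: "real \<Rightarrow> nat \<Rightarrow> real" where
  "AA lam k = (-1) ^ k * lam ^ k * dfall 1 (Suc k) (1 / lam) / fact k"

lemma AA_0: "AA lam 0 = 1"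
  by (simp add: AA_def dfall_def)

lemma AA_Suc: assumes "lam \<noteq> 0"
  shows "AA lam (Suc k) = AA lam k * (real k + 1 - lam) / (real k + 1)"
proof -
  have d: "dfall 1 (Suc (Suc k)) (1/lam) = dfall 1 (Suc k) (1/lam) * (1 - (real k + 1) / lam)"
    by (simp add: dfall_def)
  have gen0: "(- X * lam) * (D * (1 - K / lam)) / (K * F)
      = X * D / F * (K - lam) / K" if "F > 0" "K > 0" for X D F K :: real
    using assms that by (simp add: field_simps)
  have gen: "(- X * lam) * (D * (1 - (real k + 1) / lam)) / ((real k + 1) * F)
      = X * D / F * (real k + 1 - lam) / (real k + 1)" if "F > 0" for X D F :: real
    using gen0[OF that, of "real k + 1"] by simp
  have "(-1) ^ Suc k * lam ^ Suc k * (D * (1 - (real k + 1) / lam)) / (fact (Suc k))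
      = (-1) ^ k * lam ^ k * D / fact k * (real k + 1 - lam) / (real k + 1)" for D
    using gen[of "fact k" "(-1)^k * lam^k" D] by (simp add: fact_Suc algebra_simps)
  then show ?thesis unfolding AA_def d by simp
qed

lemma AA_ge: assumes "lam \<noteq> 0" "lam \<le> -1" shows "AA lam n \<ge> real n + 1"
proof (induction n)
  case 0 then show ?case by (simp add: AA_0)
next
  case (Suc n)
  have "real (Suc n) + 1 = (real n + 1) * ((real n + 2) / (real n + 1))" by (simp add: field_simps)
  also have "\<dots> \<le> AA lam n * ((real n + 1 - lam) / (real n + 1))"
    using Suc assms by (intro mult_mono divide_right_mono) auto
  finally show ?case using AA_Suc[OF assms(1)] by simp
qed

lemma key_ineq: fixes m c :: real assumes "m > 0" "c \<ge> 0" shows "1 - c / m \<le> (m / (m+1)) powr c"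
proof -
  have "1 - c/m \<le> exp (-(c/m))" using exp_ge_add_one_self[of "-(c/m)"] by simp
  also have "ln (1 + 1/m) \<le> 1/m" using ln_add_one_self_le_self[of "1/m"] assms by simp
  hence "-(c/m) \<le> c * ln (m/(m+1))"
  proof -
    have "ln (m/(m+1)) = - ln (1 + 1/m)" using assms
      by (simp add: ln_div field_simps)
    thus ?thesis using \<open>ln (1 + 1/m) \<le> 1/m\<close> assms
      by (simp add: mult_left_mono) (metis mult_left_mono times_divide_eq_right mult.right_neutral)
  qed
  hence "exp (-(c/m)) \<le> exp (c * ln (m/(m+1)))" by simp
  also have "\<dots> = (m/(m+1)) powr c" using assms by (simp add: powr_def mult.commute)
  finally show ?thesis .
qed

lemma E_rec: assumes "lam \<noteq> 0"
  shows "AA lam (Suc n) / (real (Suc n) + 1) = AA lam n / (real n + 1) * (1 - (lam + 1) / (real n + 2))"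
  unfolding AA_Suc[OF assms] by (simp add: field_simps)

lemma E_tendsto: assumes "lam \<noteq> 0" "lam > -1"
  shows "(\<lambda>n. AA lam n / (real n + 1)) \<longlonglongrightarrow> 0"
proof -
  define c where "c = lam + 1"
  define E where "E n = AA lam n / (real n + 1)" for n
  have c: "c > 0" using assms c_def by simp
  obtain N :: nat where N: "c < real N" using reals_Archimedean2 by blast
  define K where "K = \<bar>E N\<bar> * (real N + 2) powr c"
  have bound: "\<bar>E n\<bar> \<le> K / (real n + 2) powr c" if "N \<le> n" for n
    using that
  proof (induction n rule: dec_induct)
    case base
    then show ?case by (simp add: K_def)
  next
    case (step n)
    have fac: "1 - c / (real n + 2) \<ge> 0" using step N c by (simp add: field_simps)
    have "\<bar>E (Suc n)\<bar> = \<bar>E n\<bar> * (1 - c / (real n + 2))"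
      using E_rec[OF assms(1), of n] fac unfolding E_def c_def by (simp add: abs_mult)
    also have "\<dots> \<le> K / (real n + 2) powr c * ((real n + 2) / (real n + 2 + 1)) powr c"
      using step.IH key_ineq[of "real n + 2" c] c fac
      by (intro mult_mono) auto
    also have "\<dots> = K / (real (Suc n) + 2) powr c"
      by (simp add: powr_divide add_ac)
    finally show ?case .
  qed
  have lim: "(\<lambda>n. K * (real n + 2) powr (-c)) \<longlonglongrightarrow> 0"
  proof -
    have "(\<lambda>n. (real n + 2) powr (-c)) \<longlonglongrightarrow> 0"
      using c by (intro tendsto_neg_powr filterlim_at_top_mono[OF filterlim_real_sequentially]) auto
    then show ?thesis using tendsto_mult_right_zero by blast
  qed
  have "(E \<longlonglongrightarrow> 0)"
  proof (rule Lim_null_comparison[OF _ lim])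
    show "\<forall>\<^sub>F n in sequentially. norm (E n) \<le> K * (real n + 2) powr (-c)"
      using eventually_ge_at_top[of N]
      by eventually_elim (use bound in \<open>auto simp: powr_minus divide_inverse\<close>)
  qed
  then show ?thesis unfolding E_def .
qed

lemma B_partial: assumes "lam \<noteq> 0" "lam \<noteq> -1"
  shows "(\<Sum>k<n. AA lam k / ((real k + 1) * (real k + 2)))
         = 1 / (lam + 1) - AA lam n / ((real n + 1) * (lam + 1))"
proof (induction n)
  case 0
  have "lam + 1 \<noteq> 0" using assms by linarith
  then show ?case by (simp add: AA_0)
next
  case (Suc n)
  have l: "lam + 1 \<noteq> 0" using assms by linarith
  have g0: "X/(a*(a+1)) = X/(a*L) - X*(a+1-L)/a/((a+1)*L)" if "a > 0" "L \<noteq> 0" for a L X :: real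
  proof -
    have b: "a + 1 > 0" using that by simp
    have "X/(a*L) - X*(a+1-L)/a/((a+1)*L) = X/(a*L) * (1 - (a+1-L)/(a+1))"
      by (simp add: algebra_simps)
    also have "1 - (a+1-L)/(a+1) = L/(a+1)" using b by (simp add: diff_divide_distrib)
    also have "X/(a*L) * (L/(a+1)) = X/(a*(a+1))" using that by simp
    finally show ?thesis by simp
  qed
  have g: "X / ((N + 1) * (N + 2)) = X / ((N + 1) * (lam + 1)) - X * (N + 1 - lam) / (N + 1) / ((N + 1 + 1) * (lam + 1))"
    if "N \<ge> 0" for X N :: real
    using g0[of "N+1" "lam+1" X] that l by (simp add: add_ac)
  show ?case using Suc g[of "real n" "AA lam n"] unfolding AA_Suc[OF assms(1)]
    by (simp add: add_ac)
qed

lemma B_sums: assumes "lam \<noteq> 0" "lam > -1"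
  shows "(\<lambda>k. AA lam k / ((real k + 1) * (real k + 2))) sums (1 / (lam + 1))"
proof -
  have "(\<lambda>n. 1 / (lam + 1) - AA lam n / (real n + 1) / (lam + 1)) \<longlonglongrightarrow> 1 / (lam + 1) - 0 / (lam + 1)"
    by (intro tendsto_intros E_tendsto assms) (use assms in simp)
  moreover have l: "lam \<noteq> -1" using assms by simp
  ultimately show ?thesis unfolding sums_def B_partial[OF assms(1) l]
    by simp
qed

lemma z_eq: "dzeta_term lam (real s) (Suc k) = AA lam k / (real k + 1) ^ s"
proof -
  have "real (Suc k) powr real s = (real k + 1) ^ s" by (subst powr_realpow) (auto simp: add.commute)
  then show ?thesis unfolding dzeta_term_def AA_def by simp
qed

lemma lam_gt: assumes "lam \<noteq> 0" "summable (\<lambda>n. dzeta_term lam (real (2::nat)) (Suc n))"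
  shows "lam > -1"
proof (rule ccontr)
  assume "\<not> lam > -1"
  hence le: "lam \<le> -1" by simp
  have "summable (\<lambda>n. 1 / real (Suc n))"
  proof (rule summable_comparison_test[OF _ assms(2)])
    show "\<exists>N. \<forall>n\<ge>N. norm (1 / real (Suc n)) \<le> dzeta_term lam (real 2) (Suc n)"
    proof (intro exI allI impI)
      fix n :: nat
      have "1 / real (Suc n) = (real n + 1) / (real n + 1) ^ 2" by (simp add: power2_eq_square)
      also have "\<dots> \<le> AA lam n / (real n + 1) ^ 2"
        using AA_ge[OF assms(1) le, of n] by (intro divide_right_mono) auto
      finally show "norm (1 / real (Suc n)) \<le> dzeta_term lam (real 2) (Suc n)"
        unfolding z_eq by simp
    qed
  qed
  hence "summable (\<lambda>n. inverse (real n))"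
    using summable_Suc_iff[of "\<lambda>n. inverse (real n)"] by (simp add: divide_inverse)
  then show False using not_summable_harmonic by blast
qed

lemma pf: fixes m :: real assumes "m > 0"
  shows "1 / (m ^ Suc q * (m + 1)) = (\<Sum>j<q. (-1) ^ j / m ^ (q + 1 - j)) + (-1) ^ q / (m * (m + 1))"
proof (induction q)
  case 0 then show ?case by simp
next
  case (Suc q)
  have "1 / (m ^ Suc (Suc q) * (m + 1)) = (1 / (m ^ Suc q * (m + 1))) / m" by simp
  also have "\<dots> = (\<Sum>j<q. (-1) ^ j / m ^ (q + 1 - j) / m) + (-1) ^ q / (m * (m + 1)) / m"
    unfolding Suc by (simp add: sum_divide_distrib add_divide_distrib)
  also have "(\<Sum>j<q. (-1) ^ j / m ^ (q + 1 - j) / m) = (\<Sum>j<q. (-1) ^ j / m ^ (Suc q + 1 - j))"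
    by (intro sum.cong refl) (auto simp: Suc_diff_le)
  also have "(-1) ^ q / (m * (m + 1)) / m = (-1) ^ q / m ^ (Suc q + 1 - q) + (-1) ^ Suc q / (m * (m + 1))"
  proof -
    have "c / (m * (m + 1)) / m = c / m ^ 2 - c / (m * (m + 1))" for c
    proof -
      have b: "m + 1 > 0" using assms by simp
      have "c / m ^ 2 - c / (m * (m + 1)) = c/m * (1/m - 1/(m+1))" by (simp add: algebra_simps power2_eq_square)
      also have "1/m - 1/(m+1) = 1/(m*(m+1))" using assms b by (simp add: field_simps)
      finally show ?thesis by simp
    qed
    then show ?thesis by (simp add: numeral_2_eq_2)
  qed
  finally show ?case by simp
qed

theorem theorem3:
  fixes lam :: real and p :: nat
  assumes "lam \<noteq> 0" and "p \<ge> 2"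
    and "\<And>s::nat. 2 \<le> s \<Longrightarrow> s \<le> p \<Longrightarrow> summable (\<lambda>n. dzeta_term lam (real s) (Suc n))"
  shows "(\<Sum>k. (-1) ^ k * lam ^ k * dfall 1 (Suc k) (1 / lam)
              / (fact k * real (Suc k) ^ p * real (Suc k + 1)))
         = (\<Sum>k=1..p-1. (-1) ^ (k - 1) * dzeta lam (real (p - k + 1)))
           + (-1) ^ (p - 1) / (lam + 1)"
proof -
  obtain q where q: "p = Suc q" "q \<ge> 1" using assms(2) by (cases p) auto
  have lg: "lam > -1" using lam_gt[OF assms(1) assms(3)] assms(2) by simp
  define B where "B k = AA lam k / ((real k + 1) * (real k + 2))" for k
  define Z where "Z j k = dzeta_term lam (real (q + 1 - j)) (Suc k)" for j k
  have Bs: "B sums (1 / (lam + 1))" unfolding B_def using B_sums[OF assms(1) lg] .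
  have Zs: "summable (Z j)" if "j \<in> {..<q}" for j
    unfolding Z_def using that q by (intro assms(3)) auto
  have T: "(-1) ^ k * lam ^ k * dfall 1 (Suc k) (1 / lam)
              / (fact k * real (Suc k) ^ p * real (Suc k + 1))
        = (\<Sum>j<q. (-1) ^ j * Z j k) + (-1) ^ q * B k" for k
  proof -
    have m: "real k + 1 > 0" by simp
    have "(-1) ^ k * lam ^ k * dfall 1 (Suc k) (1 / lam)
              / (fact k * real (Suc k) ^ p * real (Suc k + 1))
        = AA lam k * (1 / ((real k + 1) ^ Suc q * ((real k + 1) + 1)))"
      unfolding AA_def q by (simp add: add_ac)
    also have "\<dots> = AA lam k * ((\<Sum>j<q. (-1) ^ j / (real k + 1) ^ (q + 1 - j))
        + (-1) ^ q / ((real k + 1) * ((real k + 1) + 1)))"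
      unfolding pf[OF m] ..
    also have "\<dots> = (\<Sum>j<q. (-1) ^ j * Z j k) + (-1) ^ q * B k"
      unfolding Z_def B_def z_eq
      by (simp add: sum_distrib_left distrib_left add_ac mult_ac)
    finally show ?thesis .
  qed
  have "(\<Sum>k. (-1) ^ k * lam ^ k * dfall 1 (Suc k) (1 / lam)
              / (fact k * real (Suc k) ^ p * real (Suc k + 1)))
      = (\<Sum>k. (\<Sum>j<q. (-1) ^ j * Z j k) + (-1) ^ q * B k)"
    unfolding T ..
  also have "\<dots> = (\<Sum>k. (\<Sum>j<q. (-1) ^ j * Z j k)) + (\<Sum>k. (-1) ^ q * B k)"
    by (intro suminf_add[symmetric] summable_sum summable_mult Zs sums_summable[OF Bs])
  also have "(\<Sum>k. (\<Sum>j<q. (-1) ^ j * Z j k)) = (\<Sum>j<q. (\<Sum>k. (-1) ^ j * Z j k))"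
    by (intro suminf_sum summable_mult Zs)
  also have "\<dots> = (\<Sum>j<q. (-1) ^ j * dzeta lam (real (q + 1 - j)))"
    by (intro sum.cong refl) (use suminf_mult[OF Zs] in \<open>simp add: Z_def[abs_def] dzeta_def\<close>)
  also have "(\<Sum>k. (-1) ^ q * B k) = (-1) ^ q / (lam + 1)"
    using suminf_mult[OF sums_summable[OF Bs], of "(-1)^q"] sums_unique[OF Bs]
    by (simp del: of_nat_Suc) (metis times_divide_eq_right mult.right_neutral)
  also have "(\<Sum>j<q. (-1) ^ j * dzeta lam (real (q + 1 - j)))
      = (\<Sum>k=1..p-1. (-1) ^ (k - 1) * dzeta lam (real (p - k + 1)))"
  proof -
    have "{1..p-1} = Suc ` {..<q}" 
    proof (intro set_eqI iffI)
      fix x assume "x \<in> {1..p-1}"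
      then show "x \<in> Suc ` {..<q}" using q by (intro image_eqI[of _ _ "x - 1"]) auto
    qed (use q in auto)
    then show ?thesis using q by (simp add: sum.reindex) (intro sum.cong refl, simp add: of_nat_diff add_diff_eq)
  qed
  finally show ?thesis using q by simp
qed

end
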